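(* For any hypothesis class $\mathcal{H}\subseteq\{0,1\}^{\mathcal{X}}$ and time horizon $T$, $$\inf_{\mathcal{A}}\operatorname{M}_{\mathcal{A}}(T,\mathcal{H}) \le \inf_{w\in\mathbb{N}}\Bigl\{\operatorname{AL}_w(\mathcal{H}) + 2\sqrt{(w-1)T}\Bigr\},$$ where the infimum on the left is over all (possibly randomized) online learners operating under apple tasting feedback.
   Context: Online binary classification: over rounds $t=1,\dots,T$, an adversary picks $(x_t,y_t)\in\mathcal{X}\times\{0,1\}$ and reveals $x_t$; the learner $\mathcal{A}$ (possibly randomized) outputs $\hat y_t=\mathcal{A}(x_t)\in\{0,1\}$ based on the history; under apple tasting feedback the learner observes $y_t$ only if $\hat y_t=1$. $\operatorname{M}_{\mathcal{A}}(T,\mathcal{H}) := \sup_{h\in\mathcal{H}}\sup_{x_1,\dots,x_T}\mathbb{E}\bigl[\sum_{t=1}^T \mathbb{1}\{\mathcal{A}(x_t)\neq h(x_t)\}\bigr]$ (labels $y_t=h(x_t)$, expectation over the learner's randomness). AL tree of width $w\in\mathbb{N}=\{1,2,\dots\}$ and depth $d$: a binary string $u$ is an internal node if $|u|<d$ and $u$ has fewer than $w$ ones; the tree assigns $x_u\in\mathcal{X}$ to each internal node. A path is a binary string $\sigma$ whose proper prefixes are all internal nodes but which is not itself one. The tree is shattered by $\mathcal{H}$ if for every path $\sigma$ some $h\in\mathcal{H}$ satisfies $h(x_{(\sigma_1,\dots,\sigma_{i-1})})=\sigma_i$ for all $i\le|\sigma|$. $\operatorname{AL}_w(\mathcal{H})$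 is the largest $d$ such that such a tree of width $w$ and depth $d$ is shattered ($\infty$ if unbounded, $0$ if none). *)

theory Defs
  imports "HOL-Analysis.Analysis"
begin

text \<open>Labels in {0,1} are encoded as bool (True = 1).
  A history entry of a round is (x_t, yhat_t, observed label), where the observed
  label is Some y_t if yhat_t = 1 and None otherwise (apple tasting feedback).
  A (possibly randomized) learner maps the visible history and the current instance
  to the probability of predicting 1.\<close>

type_synonym 'x hist = "('x \<times> bool \<times> bool option) list"
type_synonym 'x learner = "'x hist \<Rightarrow> 'x \<Rightarrow> real"

definition learners :: "'x learner set" where
  "learners = {L. \<forall>hs x. 0 \<le> L hs x \<and> L hs x \<le> 1}"

fun exp_mistakes :: "'x learner \<Rightarrow> ('x \<Rightarrow> bool) \<Rightarrow> 'x hist \<Rightarrow> 'x list \<Rightarrow> real" where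
  "exp_mistakes L h hs [] = 0"
| "exp_mistakes L h hs (x # xs) =
     L hs x * ((if h x then 0 else 1) + exp_mistakes L h (hs @ [(x, True, Some (h x))]) xs)
   + (1 - L hs x) * ((if h x then 1 else 0) + exp_mistakes L h (hs @ [(x, False, None)]) xs)"

definition M :: "'x learner \<Rightarrow> nat \<Rightarrow> ('x \<Rightarrow> bool) set \<Rightarrow> ennreal" where
  "M L T H = (SUP p \<in> {(h, xs). h \<in> H \<and> length xs = T}. ennreal (exp_mistakes L (fst p) [] (snd p)))"

definition internal :: "nat \<Rightarrow> nat \<Rightarrow> bool list \<Rightarrow> bool" where
  "internal w d u \<longleftrightarrow> length u < d \<and> length (filter id u) < w"

definition is_path :: "nat \<Rightarrow> nat \<Rightarrow> bool list \<Rightarrow> bool" where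
  "is_path w d \<sigma> \<longleftrightarrow> (\<forall>k < length \<sigma>. internal w d (take k \<sigma>)) \<and> \<not> internal w d \<sigma>"

definition AL_shattered :: "('x \<Rightarrow> bool) set \<Rightarrow> nat \<Rightarrow> nat \<Rightarrow> (bool list \<Rightarrow> 'x) \<Rightarrow> bool" where
  "AL_shattered H w d tr \<longleftrightarrow>
     (\<forall>\<sigma>. is_path w d \<sigma> \<longrightarrow> (\<exists>h\<in>H. \<forall>i < length \<sigma>. h (tr (take i \<sigma>)) = \<sigma> ! i))"

definition AL :: "nat \<Rightarrow> ('x \<Rightarrow> bool) set \<Rightarrow> enat" where
  "AL w H = Sup {enat d | d. \<exists>tr. AL_shattered H w d tr}"

end

theory Submission
  imports Defs
begin

lemma shattered_mono:
  "V \<subseteq> W \<Longrightarrow> AL_shattered V w d tr \<Longrightarrow> AL_shattered W w d tr"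
  unfolding AL_shattered_def by blast

lemma AL_mono: "V \<subseteq> W \<Longrightarrow> AL w V \<le> AL w W"
  unfolding AL_def by (rule Sup_subset_mono) (auto dest: shattered_mono)

lemma AL_upper: "AL_shattered V w d tr \<Longrightarrow> enat d \<le> AL w V"
  unfolding AL_def by (rule Sup_upper) auto

lemma path0: "is_path w 0 \<sigma> \<Longrightarrow> \<sigma> = []"
  unfolding is_path_def internal_def by (cases \<sigma>) auto

lemma pathw0: "is_path 0 d \<sigma> \<Longrightarrow> \<sigma> = []"
  unfolding is_path_def internal_def by (cases \<sigma>) auto

lemma shattered_depth0: "V \<noteq> {} \<Longrightarrow> AL_shattered V w 0 tr"
  unfolding AL_shattered_def by (auto dest!: path0)

lemma shattered_w0: "V \<noteq> {} \<Longrightarrow> AL_shattered V 0 d tr"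
  unfolding AL_shattered_def by (auto dest!: pathw0)

lemma AL0: "V \<noteq> {} \<Longrightarrow> AL 0 V = \<infinity>"
proof (rule ccontr)
  assume V: "V \<noteq> {}" and "AL 0 V \<noteq> \<infinity>"
  then obtain n where n: "AL 0 V = enat n" by auto
  have "enat (Suc n) \<le> AL 0 V" by (rule AL_upper[OF shattered_w0[OF V]])
  with n show False by simp
qed

lemma shattered_down:
  assumes sh: "AL_shattered V w d tr" and le: "d' \<le> d"
  shows "AL_shattered V w d' tr"
  unfolding AL_shattered_def
proof (intro allI impI)
  fix \<sigma> assume p: "is_path w d' \<sigma>"
  define \<sigma>' where "\<sigma>' = (if length (filter id \<sigma>) < w then \<sigma> @ replicate (d - length \<sigma>) False else \<sigma>)"
  have pre: "\<forall>k<length \<sigma>. length (take k \<sigma>) < d' \<and> length (filter id (take k \<sigma>)) < w"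
    using p unfolding is_path_def internal_def by blast
  have ni: "\<not> (length \<sigma> < d' \<and> length (filter id \<sigma>) < w)"
    using p unfolding is_path_def internal_def by blast
  have lsd: "length \<sigma> \<le> d'"
  proof (cases \<sigma> rule: rev_cases)
    case Nil then show ?thesis by simp
  next
    case (snoc ys y)
    then show ?thesis using pre[rule_format, of "length ys"] by simp
  qed
  have "is_path w d \<sigma>'"
  proof (cases "length (filter id \<sigma>) < w")
    case True
    then have ls: "length \<sigma> = d'" using ni lsd by simp
    have "internal w d (take k \<sigma>')" if k: "k < length \<sigma>'" for k
    proof -
      have "filter id (take k \<sigma>') = filter id (take k \<sigma> @ take (k - length \<sigma>) (replicate (d - length \<sigma>) False))"
        using True by (simp add: \<sigma>'_def take_append)
      also have "\<dots> = filter id (take k \<sigma>)"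
        by (simp add: take_replicate)
      finally have "length (filter id (take k \<sigma>')) \<le> length (filter id \<sigma>)"
        by (metis append_take_drop_id filter_append le_add1 length_append)
      moreover have "length \<sigma>' = d" using True ls le by (simp add: \<sigma>'_def)
      ultimately show ?thesis using k True unfolding internal_def by simp
    qed
    moreover have "\<not> internal w d \<sigma>'" using True ls le by (simp add: \<sigma>'_def internal_def)
    ultimately show ?thesis unfolding is_path_def by blast
  next
    case False
    then show ?thesis using pre le lsd unfolding is_path_def internal_def \<sigma>'_def by auto
  qed
  then obtain h where h: "h \<in> V" "\<forall>i<length \<sigma>'. h (tr (take i \<sigma>')) = \<sigma>' ! i"
    using sh unfolding AL_shattered_def by blast
  have "\<forall>i<length \<sigma>. h (tr (take i \<sigma>)) = \<sigma> ! i"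
  proof (intro allI impI)
    fix i assume i: "i < length \<sigma>"
    then have "i < length \<sigma>'" by (simp add: \<sigma>'_def)
    with h have "h (tr (take i \<sigma>')) = \<sigma>' ! i" by blast
    then show "h (tr (take i \<sigma>)) = \<sigma> ! i" using i
      by (simp add: \<sigma>'_def nth_append split: if_splits)
  qed
  with h show "\<exists>h\<in>V. \<forall>i<length \<sigma>. h (tr (take i \<sigma>)) = \<sigma> ! i" by blast
qed

lemma AL_ge:
  assumes V: "V \<noteq> {}" and e: "enat e \<le> AL w V"
  shows "\<exists>tr. AL_shattered V w e tr"
proof (cases e)
  case 0 then show ?thesis using shattered_depth0[OF V] by blast
next
  case (Suc e')
  then have "enat e' < enat e" by simp
  then have "enat e' < AL w V" using e by (rule less_le_trans)
  then obtain x where "x \<in> {enat d | d. \<exists>tr. AL_shattered V w d tr}" "enat e' < x"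
    unfolding AL_def less_Sup_iff by blast
  then obtain d tr where dt: "AL_shattered V w d tr" "e' < d" by auto
  then have "e \<le> d" using Suc by simp
  then have "AL_shattered V w e tr" using dt(1) shattered_down by blast
  then show ?thesis by blast
qed

lemma combine:
  assumes j: "j \<ge> 1"
    and s0: "AL_shattered V0 j e t0" and s1: "AL_shattered V1 (j - 1) e t1"
    and V0: "V0 \<subseteq> V" and V1: "V1 \<subseteq> V" and h0: "\<forall>h\<in>V0. \<not> h x" and h1: "\<forall>h\<in>V1. h x"
  shows "AL_shattered V j (Suc e) (\<lambda>u. case u of [] \<Rightarrow> x | b # u' \<Rightarrow> if b then t1 u' else t0 u')"
  unfolding AL_shattered_def
proof (intro allI impI)
  fix \<sigma> assume p: "is_path j (Suc e) \<sigma>"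
  have "\<sigma> \<noteq> []" using p j unfolding is_path_def internal_def by auto
  then obtain b \<tau> where \<sigma>: "\<sigma> = b # \<tau>" by (cases \<sigma>) auto
  have int: "internal j (Suc e) (b # u) \<longleftrightarrow> internal (if b then j - 1 else j) e u" for u
    unfolding internal_def using j by auto
  have pt: "is_path (if b then j - 1 else j) e \<tau>"
    unfolding is_path_def
  proof (intro conjI allI impI)
    fix k assume "k < length \<tau>"
    then have "Suc k < length \<sigma>" using \<sigma> by simp
    then have "internal j (Suc e) (take (Suc k) \<sigma>)" using p unfolding is_path_def by blast
    then show "internal (if b then j - 1 else j) e (take k \<tau>)" using \<sigma> int by simp
  next
    show "\<not> internal (if b then j - 1 else j) e \<tau>" using p \<sigma> int unfolding is_path_def by simp
  qed
  show "\<exists>h\<in>V. \<forall>i<length \<sigma>. h ((\<lambda>u. case u of [] \<Rightarrow> x | b # u' \<Rightarrow> if b then t1 u' else t0 u') (take i \<sigma>)) = \<sigma> ! i"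
  proof (cases b)
    case True
    then obtain h where h: "h \<in> V1" "\<forall>i<length \<tau>. h (t1 (take i \<tau>)) = \<tau> ! i"
      using s1 pt unfolding AL_shattered_def by auto
    have "\<forall>i<length \<sigma>. h ((\<lambda>u. case u of [] \<Rightarrow> x | b # u' \<Rightarrow> if b then t1 u' else t0 u') (take i \<sigma>)) = \<sigma> ! i"
    proof (intro allI impI)
      fix i assume i: "i < length \<sigma>"
      show "h ((\<lambda>u. case u of [] \<Rightarrow> x | b # u' \<Rightarrow> if b then t1 u' else t0 u') (take i \<sigma>)) = \<sigma> ! i"
      proof (cases i)
        case 0
        have "h x" using h(1) h1 by blast
        then show ?thesis using 0 True \<sigma> by simp
      next
        case (Suc i')
        then have "i' < length \<tau>" using i \<sigma> by simp
        then have "h (t1 (take i' \<tau>)) = \<tau> ! i'" using h(2) by blast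
        then show ?thesis using True \<sigma> Suc by simp
      qed
    qed
    then show ?thesis using h V1 by blast
  next
    case False
    then obtain h where h: "h \<in> V0" "\<forall>i<length \<tau>. h (t0 (take i \<tau>)) = \<tau> ! i"
      using s0 pt unfolding AL_shattered_def by auto
    have "\<forall>i<length \<sigma>. h ((\<lambda>u. case u of [] \<Rightarrow> x | b # u' \<Rightarrow> if b then t1 u' else t0 u') (take i \<sigma>)) = \<sigma> ! i"
    proof (intro allI impI)
      fix i assume i: "i < length \<sigma>"
      show "h ((\<lambda>u. case u of [] \<Rightarrow> x | b # u' \<Rightarrow> if b then t1 u' else t0 u') (take i \<sigma>)) = \<sigma> ! i"
      proof (cases i)
        case 0
        have "\<not> h x" using h(1) h0 by blast
        then show ?thesis using 0 False \<sigma> by simp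
      next
        case (Suc i')
        then have "i' < length \<tau>" using i \<sigma> by simp
        then have "h (t0 (take i' \<tau>)) = \<tau> ! i'" using h(2) by blast
        then show ?thesis using False \<sigma> Suc by simp
      qed
    qed
    then show ?thesis using h V0 by blast
  qed
qed

lemma key:
  assumes j: "j \<ge> 1" and V0ne: "{h\<in>V. \<not> h x} \<noteq> {}" and V1ne: "{h\<in>V. h x} \<noteq> {}"
    and e: "AL j V = enat e" and le: "enat e \<le> AL j {h\<in>V. \<not> h x}"
  shows "AL (j - 1) {h\<in>V. h x} < enat e"
proof (rule ccontr)
  assume "\<not> ?thesis"
  then have ge: "enat e \<le> AL (j - 1) {h\<in>V. h x}" by (simp add: not_less)
  obtain t1 where t1: "AL_shattered {h\<in>V. h x} (j - 1) e t1" using AL_ge[OF V1ne ge] by (elim exE)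
  obtain t0 where t0: "AL_shattered {h\<in>V. \<not> h x} j e t0" using AL_ge[OF V0ne le] by (elim exE)
  have s: "{h\<in>V. \<not> h x} \<subseteq> V" "{h\<in>V. h x} \<subseteq> V" "\<forall>h\<in>{h\<in>V. \<not> h x}. \<not> h x" "\<forall>h\<in>{h\<in>V. h x}. h x"
    by auto
  have "AL_shattered V j (Suc e) (\<lambda>u. case u of [] \<Rightarrow> x | b # u' \<Rightarrow> if b then t1 u' else t0 u')"
    by (rule combine[OF j t0 t1 s])
  then have "enat (Suc e) \<le> AL j V" by (rule AL_upper)
  then show False using e by simp
qed


definition vs :: "('x \<Rightarrow> bool) set \<Rightarrow> 'x hist \<Rightarrow> ('x \<Rightarrow> bool) set" where
  "vs H hs = {g\<in>H. \<forall>(x,b,y)\<in>set hs. \<forall>v. y = Some v \<longrightarrow> g x = v}"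

lemma vs_sub: "vs H hs \<subseteq> H" unfolding vs_def by blast
lemma vs_Nil[simp]: "vs H [] = H" unfolding vs_def by simp
lemma vs_T: "vs H (hs @ [(x, True, Some v)]) = {g\<in>vs H hs. g x = v}"
  unfolding vs_def by auto
lemma vs_F: "vs H (hs @ [(x, False, None)]) = vs H hs"
  unfolding vs_def by auto

locale lrn =
  fixes H :: "('x \<Rightarrow> bool) set" and w d :: nat and p c :: real
  assumes w1: "w \<ge> 1" and dH: "AL w H = enat d" and p0: "0 \<le> p" and p1: "p \<le> 1"
    and c0: "0 \<le> c" and pc: "w \<ge> 2 \<Longrightarrow> 1 - 2 * p \<le> p * c"
begin

definition J :: "('x \<Rightarrow> bool) set \<Rightarrow> nat set" where
  "J V = {j\<in>{1..w}. AL j V \<noteq> \<infinity>}"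
definition f :: "('x \<Rightarrow> bool) set \<Rightarrow> nat \<Rightarrow> real" where
  "f V j = real (the_enat (AL j V)) + real (j - 1) * c"
definition Phi :: "('x \<Rightarrow> bool) set \<Rightarrow> real" where
  "Phi V = Min (f V ` J V)"
definition jst :: "('x \<Rightarrow> bool) set \<Rightarrow> nat" where
  "jst V = (SOME j. j \<in> J V \<and> f V j = Phi V)"
definition L :: "'x learner" where
  "L hs x = (let V = vs H hs; V0 = {h\<in>V. \<not> h x}; j = jst V in
     if V0 = {} then 1 else if AL j V0 < AL j V then 1 else p)"

lemma L_in: "L \<in> learners"
  unfolding learners_def L_def Let_def using p0 p1 by auto

lemma finJ: "finite (J V)" unfolding J_def by auto

lemma wJ: "V \<subseteq> H \<Longrightarrow> w \<in> J V"
proof -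
  assume "V \<subseteq> H"
  then have "AL w V \<le> enat d" using AL_mono[of V H w] dH by simp
  then have "AL w V \<noteq> \<infinity>" by (cases "AL w V") auto
  then show ?thesis unfolding J_def using w1 by auto
qed

lemma Phi_le: "V \<subseteq> H \<Longrightarrow> j \<in> J V \<Longrightarrow> Phi V \<le> f V j"
  unfolding Phi_def using finJ by (intro Min_le) auto

lemma jst: "V \<subseteq> H \<Longrightarrow> jst V \<in> J V \<and> f V (jst V) = Phi V"
proof -
  assume "V \<subseteq> H"
  then have "J V \<noteq> {}" using wJ by blast
  then have "Phi V \<in> f V ` J V" unfolding Phi_def using finJ by (intro Min_in) auto
  then have "\<exists>j. j \<in> J V \<and> f V j = Phi V" by auto
  then show ?thesis unfolding jst_def by (rule someI_ex)
qed

lemma enat_le_the: "a \<le> b \<Longrightarrow> b \<noteq> \<infinity> \<Longrightarrow> the_enat a \<le> the_enat b \<and> a \<noteq> \<infinity>"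
  by (cases a; cases b) auto

lemma enat_less_the: "a < b \<Longrightarrow> b \<noteq> \<infinity> \<Longrightarrow> the_enat a + 1 \<le> the_enat b \<and> a \<noteq> \<infinity>"
  by (cases a; cases b) auto

lemma Phi_mono: assumes "V' \<subseteq> V" "V \<subseteq> H" shows "Phi V' \<le> Phi V"
proof -
  let ?j = "jst V"
  have j: "?j \<in> J V" "f V ?j = Phi V" using jst assms by auto
  have le: "AL ?j V' \<le> AL ?j V" using AL_mono assms by blast
  have fin: "AL ?j V \<noteq> \<infinity>" using j unfolding J_def by auto
  from enat_le_the[OF le fin] have "?j \<in> J V'" "f V' ?j \<le> f V ?j"
    using j unfolding J_def f_def by auto
  moreover have "V' \<subseteq> H" using assms by blast
  ultimately show ?thesis using Phi_le[of V' ?j] assms j by fastforce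
qed

lemma Phi_dec1: assumes "V' \<subseteq> V" "V \<subseteq> H" "AL (jst V) V' < AL (jst V) V"
  shows "Phi V' \<le> Phi V - 1"
proof -
  let ?j = "jst V"
  have j: "?j \<in> J V" "f V ?j = Phi V" using jst assms by auto
  have fin: "AL ?j V \<noteq> \<infinity>" using j unfolding J_def by auto
  from enat_less_the[OF assms(3) fin] have "?j \<in> J V'" "f V' ?j \<le> f V ?j - 1"
    using j unfolding J_def f_def by auto
  moreover have "V' \<subseteq> H" using assms by blast
  ultimately show ?thesis using Phi_le[of V' ?j] assms j by fastforce
qed

lemma Phi_dec2: assumes "V' \<subseteq> V" "V \<subseteq> H" "jst V \<ge> 2" "AL (jst V - 1) V' < AL (jst V) V"
  shows "Phi V' \<le> Phi V - c"
proof -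
  let ?j = "jst V"
  have j: "?j \<in> J V" "f V ?j = Phi V" using jst assms by auto
  have fin: "AL ?j V \<noteq> \<infinity>" using j unfolding J_def by auto
  from enat_less_the[OF assms(4) fin] have A: "?j - 1 \<in> J V'"
    "real (the_enat (AL (?j - 1) V')) + 1 \<le> real (the_enat (AL ?j V))"
    using j assms(3) unfolding J_def by auto
  have "real (?j - 1 - 1) * c = real (?j - 1) * c - c"
    using assms(3) by (simp add: of_nat_diff algebra_simps)
  with A have "f V' (?j - 1) \<le> f V ?j - c" unfolding f_def by linarith
  moreover have "V' \<subseteq> H" using assms by blast
  ultimately have "Phi V' \<le> f V' (?j - 1)" using Phi_le[of V' "?j - 1"] A by blast
  then show ?thesis using \<open>f V' (?j - 1) \<le> f V ?j - c\<close> j by linarith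
qed

lemma Phi_nonneg: "V \<subseteq> H \<Longrightarrow> 0 \<le> Phi V"
  using jst[of V] c0 unfolding f_def by (metis of_nat_0_le_iff mult_nonneg_nonneg add_nonneg_nonneg)

lemma main:
  assumes h: "h \<in> vs H hs"
  shows "exp_mistakes L h hs xs \<le> Phi (vs H hs) + p * length xs"
  using h
proof (induction xs arbitrary: hs)
  case Nil
  have "0 \<le> Phi (vs H hs)" using Phi_nonneg[OF vs_sub] .
  then show ?case by simp
next
  case (Cons x xs)
  define V where "V = vs H hs"
  define V0 where "V0 = {h\<in>V. \<not> h x}"
  define V1 where "V1 = {h\<in>V. h x}"
  define j where "j = jst V"
  define n where "n = real (length xs)"
  have VH: "V \<subseteq> H" unfolding V_def by (rule vs_sub)
  have hV: "h \<in> V" using Cons.prems V_def by simp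
  have ET: "exp_mistakes L h (hs @ [(x, True, Some (h x))]) xs \<le> Phi (if h x then V1 else V0) + p * n"
    using Cons.IH[of "hs @ [(x, True, Some (h x))]"] hV unfolding vs_T V0_def V1_def V_def n_def
    by (auto split: if_splits)
  have EF: "exp_mistakes L h (hs @ [(x, False, None)]) xs \<le> Phi V + p * n"
    using Cons.IH[of "hs @ [(x, False, None)]"] hV unfolding vs_F V_def n_def by auto
  have goal: "?case = (exp_mistakes L h hs (x # xs) \<le> Phi V + p * n + p)"
    by (simp add: V_def n_def algebra_simps)
  have Lx: "L hs x = (if V0 = {} then 1 else if AL j V0 < AL j V then 1 else p)"
    unfolding L_def V0_def V_def j_def Let_def by simp
  have V0V: "V0 \<subseteq> V" and V1V: "V1 \<subseteq> V" unfolding V0_def V1_def by auto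
  show ?case unfolding goal
  proof (cases "V0 = {}")
    case True
    then have hx: "h x" using hV V0_def by auto
    have "V1 = V" using True unfolding V0_def V1_def by auto
    then show "exp_mistakes L h hs (x # xs) \<le> Phi V + p * n + p"
      using ET hx Lx True p0 by simp
  next
    case V0ne: False
    show "exp_mistakes L h hs (x # xs) \<le> Phi V + p * n + p"
    proof (cases "AL j V0 < AL j V")
      case True
      show ?thesis
      proof (cases "h x")
        case True
        then show ?thesis using ET Lx V0ne \<open>AL j V0 < AL j V\<close> p0 Phi_mono[OF V1V VH] by simp
      next
        case False
        then show ?thesis using ET Lx V0ne \<open>AL j V0 < AL j V\<close> p0 Phi_dec1[OF V0V VH]
          unfolding j_def by simp
      qed
    next
      case notlt: False
      show ?thesis
      proof (cases "h x")
        case hx: True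
        have jJ: "j \<in> J V" using jst[OF VH] j_def by auto
        then obtain e where e: "AL j V = enat e" unfolding J_def by auto
        have V1ne: "V1 \<noteq> {}" using hV hx V1_def by auto
        have j1: "j \<ge> 1" using jJ unfolding J_def by auto
        have lt: "AL (j - 1) V1 < enat e"
          using key[OF j1, of V x e] V0ne V1ne e notlt unfolding V0_def V1_def by auto
        have j2: "j \<ge> 2"
        proof (rule ccontr)
          assume "\<not> j \<ge> 2"
          then have "j - 1 = 0" by simp
          then show False using lt AL0[OF V1ne] by simp
        qed
        have w2: "w \<ge> 2" using jJ j2 unfolding J_def by auto
        have P1: "Phi V1 \<le> Phi V - c"
          using Phi_dec2[OF V1V VH] j2 lt e unfolding j_def by simp
        have E1: "exp_mistakes L h (hs @ [(x, True, Some (h x))]) xs \<le> Phi V - c + p * n"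
          using ET hx P1 by simp
        have "exp_mistakes L h hs (x # xs) =
          p * exp_mistakes L h (hs @ [(x, True, Some (h x))]) xs
          + (1 - p) * (1 + exp_mistakes L h (hs @ [(x, False, None)]) xs)"
          using Lx V0ne notlt hx by simp
        also have "\<dots> \<le> p * (Phi V - c + p * n) + (1 - p) * (1 + (Phi V + p * n))"
          using E1 EF p0 p1 by (intro add_mono mult_left_mono) auto
        also have "\<dots> = Phi V + p * n + (1 - p - p * c)" by (simp add: algebra_simps)
        also have "\<dots> \<le> Phi V + p * n + p" using pc[OF w2] by linarith
        finally show ?thesis .
      next
        case hx: False
        have E1: "exp_mistakes L h (hs @ [(x, True, Some (h x))]) xs \<le> Phi V + p * n"
          using ET hx Phi_mono[OF V0V VH] by simp
        have "exp_mistakes L h hs (x # xs) =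
          p * (1 + exp_mistakes L h (hs @ [(x, True, Some (h x))]) xs)
          + (1 - p) * exp_mistakes L h (hs @ [(x, False, None)]) xs"
          using Lx V0ne notlt hx by simp
        also have "\<dots> \<le> p * (1 + (Phi V + p * n)) + (1 - p) * (Phi V + p * n)"
          using E1 EF p0 p1 by (intro add_mono mult_left_mono) auto
        also have "\<dots> = Phi V + p * n + p" by (simp add: algebra_simps)
        finally show ?thesis .
      qed
    qed
  qed
qed

lemma Phi_H: "Phi H \<le> real d + real (w - 1) * c"
  using Phi_le[of H w] wJ[of H] dH unfolding f_def by simp

end

lemma ar1: fixes k T :: real assumes "k > 0" "T > 0" shows "k * sqrt (T / k) = sqrt (k * T)"
proof -
  have "sqrt (k * T) = sqrt (k * k * (T / k))" using assms by simp
  also have "\<dots> = sqrt (k * k) * sqrt (T / k)" by (rule real_sqrt_mult)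
  also have "\<dots> = k * sqrt (T / k)" using assms by simp
  finally show ?thesis by simp
qed

lemma ar2: fixes k T :: real assumes "k > 0" "T > 0" shows "sqrt (k / T) * T = sqrt (k * T)"
proof -
  have "sqrt (k * T) = sqrt (T * T * (k / T))" using assms by (simp add: algebra_simps)
  also have "\<dots> = sqrt (T * T) * sqrt (k / T)" by (rule real_sqrt_mult)
  also have "\<dots> = T * sqrt (k / T)" using assms by simp
  finally show ?thesis by simp
qed

lemma ar3: fixes k T :: real assumes "k > 0" "T > 0" shows "sqrt (k / T) * sqrt (T / k) = 1"
  using assms by (simp add: real_sqrt_mult[symmetric])

lemma ar4: fixes k T :: real assumes "0 \<le> T" "T \<le> k" shows "T \<le> sqrt (k * T)"
proof -
  have "sqrt (T * T) \<le> sqrt (k * T)" using assms by (intro real_sqrt_le_mono mult_right_mono) auto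
  then show ?thesis using assms by simp
qed

theorem lemma2:
  fixes H :: "('x \<Rightarrow> bool) set" and T :: nat
  shows "(INF L \<in> learners. M L T H)
     \<le> (INF w \<in> {1..}. ennreal_of_enat (AL w H) + ennreal (2 * sqrt (real (w - 1) * real T)))"
proof (rule INF_greatest)
  fix w :: nat assume "w \<in> {1..}"
  then have w1: "w \<ge> 1" by simp
  show "(INF L \<in> learners. M L T H) \<le> ennreal_of_enat (AL w H) + ennreal (2 * sqrt (real (w - 1) * real T))"
  proof (cases "AL w H")
    case infinity
    then show ?thesis by simp
  next
    case (enat d)
    define k where "k = real (w - 1)"
    define p :: real where "p = (if real T \<le> k then 1 else sqrt (k / real T))"
    define c :: real where "c = (if real T \<le> k \<or> k = 0 then 0 else sqrt (real T / k))"
    have k0: "k \<ge> 0" unfolding k_def by simp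
    have p0: "0 \<le> p" and p1: "p \<le> 1" unfolding p_def using k0 by (auto simp: real_sqrt_le_1_iff)
    have c0: "0 \<le> c" unfolding c_def using k0 by simp
    have pc: "1 - 2 * p \<le> p * c" if "w \<ge> 2"
    proof -
      have "k > 0" using that unfolding k_def by simp
      then show ?thesis using ar3[of k "real T"] unfolding p_def c_def by auto
    qed
    have bnd: "k * c + p * real T \<le> 2 * sqrt (k * real T)"
    proof (cases "real T \<le> k")
      case True
      then show ?thesis unfolding p_def c_def using ar4[of "real T" k] by simp
    next
      case False
      show ?thesis
      proof (cases "k = 0")
        case True then show ?thesis using False unfolding p_def c_def by simp
      next
        case kne: False
        then have "k > 0" using k0 by simp
        moreover have "real T > 0" using False k0 by simp
        ultimately show ?thesis using False kne ar1[of k "real T"] ar2[of k "real T"]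
          unfolding p_def c_def by simp
      qed
    qed
    interpret lrn H w d p c
      by unfold_locales (use w1 enat p0 p1 c0 pc in auto)
    have "M L T H \<le> ennreal (real d + 2 * sqrt (k * real T))"
      unfolding M_def
    proof (rule SUP_least)
      fix q :: "('x \<Rightarrow> bool) \<times> 'x list" assume "q \<in> {(h, xs). h \<in> H \<and> length xs = T}"
      then obtain h and xs :: "'x list" where q: "q = (h, xs)" "h \<in> H" "length xs = T" by auto
      have "exp_mistakes L h [] xs \<le> Phi H + p * real T"
        using main[of h "[]" xs] q by simp
      also have "\<dots> \<le> real d + k * c + p * real T" using Phi_H unfolding k_def by simp
      also have "\<dots> \<le> real d + 2 * sqrt (k * real T)" using bnd by simp
      finally show "ennreal (exp_mistakes L (fst q) [] (snd q)) \<le> ennreal (real d + 2 * sqrt (k * real T))"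
        using q by (simp add: ennreal_leI)
    qed
    also have "\<dots> = ennreal_of_enat (AL w H) + ennreal (2 * sqrt (real (w - 1) * real T))"
      using enat unfolding k_def by (simp add: ennreal_plus ennreal_of_nat_eq_real_of_nat)
    finally have "M L T H \<le> ennreal_of_enat (AL w H) + ennreal (2 * sqrt (real (w - 1) * real T))" .
    moreover have "(INF L \<in> learners. M L T H) \<le> M L T H" using L_in by (rule INF_lower)
    ultimately show ?thesis by (rule order_trans[rotated])
  qed
qed

end
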